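(* Let $\Omega\subset\mathbb{R}^2$ be a bounded domain with smooth boundary, $A\in C^\infty(\overline{\Omega};\mathbb{R}^{2\times 2})$ symmetric and uniformly elliptic, and for $x\in\Omega$ let $\psi_x(y):=A(y)^{-1}(y-x)\cdot(y-x)$. Then there exist $M_0\in C^\infty(\overline\Omega;\mathbb{R}^{2\times2})$ and a Borel measurable, locally bounded $N_0:\Omega\times\Omega\to\mathbb{R}^{2\times2}$, smooth on $\Omega\times\Omega\setminus\{(x,x):x\in\Omega\}$, such that $$D_y^2(\psi_x\log\psi_x)(y)=\tfrac{1}{\sqrt2}\,\mathrm{div}_y\big(A(y)\nabla_y(\psi_x\log\psi_x)(y)\big)M_0(y)+N_0(x,y)\quad\text{for all }(x,y)\in\Omega\times\Omega,\ x\neq y.$$ Moreover, $M_0(x)=\tfrac{1}{\sqrt2}A(x)^{-1}$ for all $x\in\Omega$.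
   Context: Uniform ellipticity: there is $\lambda>0$ with $\lambda|\xi|^2\le A(x)\xi\cdot\xi$. *)

theory Defs
  imports "HOL-Analysis.Analysis"
begin

fun Ck_on :: "nat \<Rightarrow> 'a::euclidean_space set \<Rightarrow> ('a \<Rightarrow> 'b::real_normed_vector) \<Rightarrow> bool" where
  "Ck_on 0 S f = continuous_on S f"
| "Ck_on (Suc k) S f = (f differentiable_on S \<and>
      (\<forall>b\<in>Basis. Ck_on k S (\<lambda>x. frechet_derivative f (at x) b)))"

definition smooth_on :: "'a::euclidean_space set \<Rightarrow> ('a \<Rightarrow> 'b::real_normed_vector) \<Rightarrow> bool" where
  "smooth_on S f \<longleftrightarrow> (\<forall>k. Ck_on k S f)"

definition smooth_on_closure :: "'a::euclidean_space set \<Rightarrow> ('a \<Rightarrow> 'b::real_normed_vector) \<Rightarrow> bool" where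
  "smooth_on_closure \<Omega> f \<longleftrightarrow>
     (\<exists>U g. open U \<and> closure \<Omega> \<subseteq> U \<and> smooth_on U g \<and> (\<forall>x\<in>closure \<Omega>. g x = f x))"

definition smooth_bounded_domain :: "'a::euclidean_space set \<Rightarrow> bool" where
  "smooth_bounded_domain \<Omega> \<longleftrightarrow> open \<Omega> \<and> connected \<Omega> \<and> \<Omega> \<noteq> {} \<and> bounded \<Omega> \<and>
     (\<forall>p\<in>frontier \<Omega>. \<exists>r>0. \<exists>\<phi>::'a \<Rightarrow> real.
        smooth_on (ball p r) \<phi> \<and>
        (\<forall>y\<in>ball p r. frechet_derivative \<phi> (at y) \<noteq> (\<lambda>_. 0)) \<and>
        \<Omega> \<inter> ball p r = {y\<in>ball p r. \<phi> y < 0})"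

definition partial_deriv :: "(real^'n \<Rightarrow> 'b::real_normed_vector) \<Rightarrow> 'n \<Rightarrow> real^'n \<Rightarrow> 'b" where
  "partial_deriv f i x = frechet_derivative f (at x) (axis i 1)"

definition gradient :: "(real^'n \<Rightarrow> real) \<Rightarrow> real^'n \<Rightarrow> real^'n" where
  "gradient f x = (\<chi> j. partial_deriv f j x)"

definition hessian :: "(real^'n \<Rightarrow> real) \<Rightarrow> real^'n \<Rightarrow> real^'n^'n" where
  "hessian f x = (\<chi> i j. partial_deriv (\<lambda>z. partial_deriv f j z) i x)"

definition divergence :: "(real^'n \<Rightarrow> real^'n) \<Rightarrow> real^'n \<Rightarrow> real" where
  "divergence V x = (\<Sum>i\<in>UNIV. partial_deriv (\<lambda>z. V z $ i) i x)"

definition uniformly_elliptic :: "(real^'n) set \<Rightarrow> (real^'n \<Rightarrow> real^'n^'n) \<Rightarrow> bool" where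
  "uniformly_elliptic S A \<longleftrightarrow>
     (\<exists>c>0. \<forall>y\<in>S. \<forall>\<xi>. c * (norm \<xi>)\<^sup>2 \<le> (A y *v \<xi>) \<bullet> \<xi>)"

definition locally_bounded_on :: "'a::metric_space set \<Rightarrow> ('a \<Rightarrow> 'b::real_normed_vector) \<Rightarrow> bool" where
  "locally_bounded_on S f \<longleftrightarrow> (\<forall>p\<in>S. \<exists>r>0. bounded (f ` (ball p r \<inter> S)))"

definition psi :: "(real^2 \<Rightarrow> real^2^2) \<Rightarrow> real^2 \<Rightarrow> real^2 \<Rightarrow> real" where
  "psi A x y = (matrix_inv (A y) *v (y - x)) \<bullet> (y - x)"

end

theory Submission
  imports Defs
begin
lemma fd_works_open:
  assumes "f differentiable_on S" "open S" "x \<in> S"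
  shows "(f has_derivative frechet_derivative f (at x)) (at x)"
  using assms by (metis at_within_open differentiable_on_def frechet_derivative_works)

lemma Ck_cong:
  assumes "open S" "\<And>x. x \<in> S \<Longrightarrow> f x = g x" "Ck_on k S f"
  shows "Ck_on k S g"
  using assms
proof (induction k arbitrary: f g)
  case 0
  then show ?case using continuous_on_cong by force
next
  case (Suc k)
  have d: "f differentiable_on S" and c: "\<And>b. b\<in>Basis \<Longrightarrow> Ck_on k S (\<lambda>x. frechet_derivative f (at x) b)"
    using Suc.prems by auto
  have eq: "frechet_derivative f (at x) = frechet_derivative g (at x)" if "x \<in> S" for x
    by (rule frechet_derivative_transform_within_open[OF _ \<open>open S\<close> that])
       (use d that Suc.prems in \<open>auto simp: differentiable_on_def at_within_open[OF _ \<open>open S\<close>]\<close>)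
  have "g differentiable_on S"
    unfolding differentiable_on_def
  proof
    fix x assume x: "x \<in> S"
    have "(g has_derivative frechet_derivative f (at x)) (at x)"
      by (rule has_derivative_transform_within_open[OF fd_works_open[OF d \<open>open S\<close> x] \<open>open S\<close> x])
         (use Suc.prems in auto)
    then show "g differentiable at x within S"
      using x \<open>open S\<close> by (metis at_within_open differentiableI)
  qed
  moreover have "Ck_on k S (\<lambda>x. frechet_derivative g (at x) b)" if "b\<in>Basis" for b
    by (rule Suc.IH[OF \<open>open S\<close> _ c[OF that]]) (simp add: eq)
  ultimately show ?case by simp
qed

lemma Ck_Suc_imp: "Ck_on (Suc k) S f \<Longrightarrow> Ck_on k S f"
proof (induction k arbitrary: f)
  case 0
  then show ?case by (simp add: differentiable_imp_continuous_on)
next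
  case (Suc k)
  then show ?case by (metis Ck_on.simps(2))
qed

lemma Ck_le: "Ck_on k S f \<Longrightarrow> j \<le> k \<Longrightarrow> Ck_on j S f"
proof (induction k)
  case 0 then show ?case by simp
next
  case (Suc k) then show ?case using Ck_Suc_imp le_Suc_eq by metis
qed

lemma smooth_Ck: "smooth_on S f \<Longrightarrow> Ck_on k S f"
  by (simp add: smooth_on_def)

lemma Ck_const: "Ck_on k S (\<lambda>x. c::'b::real_normed_vector)"
proof (induction k arbitrary: c)
  case 0 then show ?case by simp
next
  case (Suc k)
  have "frechet_derivative (\<lambda>x. c) (at x) = (\<lambda>h. 0)" for x
    by (metis frechet_derivative_at has_derivative_const)
  then show ?case using Suc by simp
qed

lemma Ck_SucI:
  assumes "open S" "\<And>x. x \<in> S \<Longrightarrow> (f has_derivative D x) (at x)"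
    "\<And>b. b \<in> Basis \<Longrightarrow> Ck_on k S (\<lambda>x. D x b)"
  shows "Ck_on (Suc k) S f"
proof -
  have "f differentiable_on S"
    using assms(1,2) by (metis at_within_open differentiableI differentiable_on_def)
  moreover have "Ck_on k S (\<lambda>x. frechet_derivative f (at x) b)" if "b \<in> Basis" for b
    by (rule Ck_cong[OF assms(1) _ assms(3)[OF that]]) (metis assms(2) frechet_derivative_at)
  ultimately show ?thesis by simp
qed

lemma Ck_SucD:
  assumes "Ck_on (Suc k) S f" "open S" "x \<in> S"
  shows "(f has_derivative frechet_derivative f (at x)) (at x)"
  using assms fd_works_open by auto

lemma Ck_subset:
  assumes "Ck_on k S f" "open T" "T \<subseteq> S" "open S"
  shows "Ck_on k T f"
  using assms
proof (induction k arbitrary: f)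
  case 0 then show ?case using continuous_on_subset by auto
next
  case (Suc k)
  show ?case
    by (rule Ck_SucI[OF \<open>open T\<close>, where D="\<lambda>x. frechet_derivative f (at x)"])
       (use Suc in \<open>auto intro: Ck_SucD\<close>)
qed

lemma Ck_linear_out:
  assumes "bounded_linear l" "Ck_on k S f" "open S"
  shows "Ck_on k S (\<lambda>x. l (f x))"
  using assms(2,3)
proof (induction k arbitrary: f)
  case 0 then show ?case
    using continuous_on_compose2[of UNIV l S f] linear_continuous_on[OF assms(1)] by auto
next
  case (Suc k)
  show ?case
    by (rule Ck_SucI[OF \<open>open S\<close>, where D="\<lambda>x h. l (frechet_derivative f (at x) h)"])
       (use Suc in \<open>auto intro: fd_works_open bounded_linear.has_derivative[OF assms(1)]\<close>)
qed

lemma Ck_add: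
  fixes f g :: "'a::euclidean_space \<Rightarrow> 'b::real_normed_vector"
  assumes "Ck_on k S f" "Ck_on k S g" "open S"
  shows "Ck_on k S (\<lambda>x. f x + g x)"
  using assms
proof (induction k arbitrary: f g)
  case 0 then show ?case by (simp add: continuous_on_add)
next
  case (Suc k)
  show ?case
    by (rule Ck_SucI[OF \<open>open S\<close>, where D="\<lambda>x h. frechet_derivative f (at x) h + frechet_derivative g (at x) h"])
       (use Suc in \<open>auto intro!: fd_works_open has_derivative_add\<close>)
qed

lemma Ck_sum:
  fixes f :: "'i \<Rightarrow> 'a::euclidean_space \<Rightarrow> 'b::real_normed_vector"
  assumes "\<And>i. i \<in> I \<Longrightarrow> Ck_on k S (f i)" "open S"
  shows "Ck_on k S (\<lambda>x. \<Sum>i\<in>I. f i x)"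
  using assms(1)
proof (induction I rule: infinite_finite_induct)
  case (infinite A) then show ?case by (simp add: Ck_const)
next
  case empty then show ?case by (simp add: Ck_const)
next
  case (insert a A) then show ?case by (simp add: Ck_add assms(2))
qed

lemma Ck_mult:
  fixes f g :: "'a::euclidean_space \<Rightarrow> real"
  assumes "Ck_on k S f" "Ck_on k S g" "open S"
  shows "Ck_on k S (\<lambda>x. f x * g x)"
  using assms
proof (induction k arbitrary: f g)
  case 0 then show ?case by (simp add: continuous_on_mult)
next
  case (Suc k)
  have fk: "Ck_on k S f" and gk: "Ck_on k S g" using Suc.prems Ck_Suc_imp by blast+
  show ?case
  proof (rule Ck_SucI[OF \<open>open S\<close>, where D="\<lambda>x h. f x * frechet_derivative g (at x) h + frechet_derivative f (at x) h * g x"])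
    fix x assume "x \<in> S"
    then show "((\<lambda>x. f x * g x) has_derivative (\<lambda>h. f x * frechet_derivative g (at x) h + frechet_derivative f (at x) h * g x)) (at x)"
      using Suc.prems by (auto intro!: has_derivative_mult fd_works_open)
  next
    fix b :: 'a assume "b \<in> Basis"
    then show "Ck_on k S (\<lambda>x. f x * frechet_derivative g (at x) b + frechet_derivative f (at x) b * g x)"
      using Suc.prems fk gk by (intro Ck_add Suc.IH) auto
  qed
qed

lemma Ck_inverse:
  fixes f :: "'a::euclidean_space \<Rightarrow> real"
  assumes "Ck_on k S f" "open S" "\<And>x. x \<in> S \<Longrightarrow> f x \<noteq> 0"
  shows "Ck_on k S (\<lambda>x. inverse (f x))"
  using assms
proof (induction k arbitrary: f)
  case 0 then show ?case by (simp add: continuous_on_inverse)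
next
  case (Suc k)
  have fk: "Ck_on k S f" using Suc.prems Ck_Suc_imp by blast
  have ik: "Ck_on k S (\<lambda>x. inverse (f x))" using Suc.IH[OF fk] Suc.prems by blast
  show ?case
  proof (rule Ck_SucI[OF \<open>open S\<close>, where D="\<lambda>x h. - (inverse (f x) * frechet_derivative f (at x) h * inverse (f x))"])
    fix x assume "x \<in> S"
    then show "((\<lambda>x. inverse (f x)) has_derivative (\<lambda>h. - (inverse (f x) * frechet_derivative f (at x) h * inverse (f x)))) (at x)"
      using Suc.prems by (auto intro!: Deriv.has_derivative_inverse fd_works_open)
  next
    fix b :: 'a assume "b \<in> Basis"
    then have "Ck_on k S (\<lambda>x. inverse (f x) * frechet_derivative f (at x) b * inverse (f x))"
      using Suc.prems ik by (intro Ck_mult) auto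
    then show "Ck_on k S (\<lambda>x. - (inverse (f x) * frechet_derivative f (at x) b * inverse (f x)))"
      using Ck_linear_out[OF bounded_linear_minus[OF bounded_linear_ident]] Suc.prems by blast
  qed
qed

lemma Ck_ln:
  fixes f :: "'a::euclidean_space \<Rightarrow> real"
  assumes "Ck_on k S f" "open S" "\<And>x. x \<in> S \<Longrightarrow> f x > 0"
  shows "Ck_on k S (\<lambda>x. ln (f x))"
proof (cases k)
  case 0 
  have "\<forall>x\<in>S. f x \<noteq> 0" using assms(3) by force
  then show ?thesis using assms 0 by (auto intro!: continuous_on_ln)
next
  case (Suc k')
  have fk: "Ck_on k' S f" using assms Suc Ck_Suc_imp by blast
  have ik: "Ck_on k' S (\<lambda>x. inverse (f x))" using Ck_inverse[OF fk] assms by force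
  show ?thesis unfolding Suc
  proof (rule Ck_SucI[OF \<open>open S\<close>, where D="\<lambda>x h. inverse (f x) * frechet_derivative f (at x) h"])
    fix x assume x: "x \<in> S"
    have "((\<lambda>x. ln (f x)) has_derivative (\<lambda>h. frechet_derivative f (at x) h * inverse (f x))) (at x)"
      using assms x Suc by (auto intro!: has_derivative_ln fd_works_open)
    then show "((\<lambda>x. ln (f x)) has_derivative (\<lambda>h. inverse (f x) * frechet_derivative f (at x) h)) (at x)"
      by (simp add: mult.commute)
  next
    fix b :: 'a assume "b \<in> Basis"
    then show "Ck_on k' S (\<lambda>x. inverse (f x) * frechet_derivative f (at x) b)"
      using assms Suc ik by (intro Ck_mult) auto
  qed
qed

lemma bounded_linear_axis: "bounded_linear (\<lambda>v::'b::real_normed_vector. axis i v :: 'b^'n)"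
proof (rule bounded_linear_intro[where K=1])
  show "axis i (x + y) = axis i x + axis i y" for x y :: 'b
    by (simp add: axis_def vec_eq_iff)
  show "axis i (r *\<^sub>R x) = r *\<^sub>R axis i x" for r and x :: 'b
    by (simp add: axis_def vec_eq_iff)
  show "norm (axis i x :: 'b^'n) \<le> norm x * 1" for x :: 'b
  proof -
    have "norm (axis i x :: 'b^'n) \<le> (\<Sum>j\<in>UNIV. norm (axis i x $ j))"
      unfolding norm_vec_def by (rule L2_set_le_sum) auto
    also have "\<dots> = norm x"
      by (simp add: axis_def if_distrib cong: if_cong)
    finally show ?thesis by simp
  qed
qed

lemma Ck_vec:
  fixes f :: "'a::euclidean_space \<Rightarrow> 'b::real_normed_vector^'n"
  assumes "\<And>i. Ck_on k S (\<lambda>x. f x $ i)" "open S"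
  shows "Ck_on k S f"
proof -
  have c: "Ck_on k S (\<lambda>x. \<Sum>i\<in>UNIV. axis i (f x $ i))"
    by (rule Ck_sum[OF Ck_linear_out[OF bounded_linear_axis assms(1)]]) (use assms in auto)
  have e: "(\<Sum>i\<in>UNIV. axis i (f x $ i)) = f x" for x
  proof -
    have "(\<Sum>i\<in>UNIV. axis i (f x $ i)) $ j = f x $ j" for j
    proof -
      have "(\<Sum>i\<in>UNIV. axis i (f x $ i)) $ j = (\<Sum>i\<in>UNIV. if i = j then f x $ j else 0)"
        unfolding sum_component by (rule sum.cong) (auto simp: axis_def)
      then show ?thesis by simp
    qed
    then show ?thesis by (simp add: vec_eq_iff)
  qed
  show ?thesis by (rule Ck_cong[OF assms(2) e c])
qed

lemma Ck_nth:
  fixes f :: "'a::euclidean_space \<Rightarrow> 'b::real_normed_vector^'n"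
  assumes "Ck_on k S f" "open S"
  shows "Ck_on k S (\<lambda>x. f x $ i)"
  by (rule Ck_linear_out[OF bounded_linear_vec_nth assms])

lemma Ck_blinear:
  assumes "bounded_linear l" "open S"
  shows "Ck_on k S l"
proof (cases k)
  case 0 then show ?thesis using assms linear_continuous_on by auto
next
  case (Suc k')
  show ?thesis unfolding Suc
    by (rule Ck_SucI[OF assms(2), where D="\<lambda>x. l"]) (simp_all add: Ck_const bounded_linear_imp_has_derivative[OF assms(1)])
qed

lemma Ck_comp_snd:
  fixes g :: "'b::euclidean_space \<Rightarrow> 'c::real_normed_vector"
  assumes "Ck_on k T g" "open T" "open S" "snd ` S \<subseteq> T"
  shows "Ck_on k S (\<lambda>p::'a::euclidean_space \<times> 'b. g (snd p))"
  using assms(1)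
proof (induction k arbitrary: g)
  case 0 
  have "continuous_on S (\<lambda>p::'a \<times> 'b. snd p)" by (rule continuous_on_snd[OF continuous_on_id])
  then show ?case
    using continuous_on_compose2[of T g S snd] assms(4) 0 by simp
next
  case (Suc k)
  show ?case
  proof (rule Ck_SucI[OF assms(3), where D="\<lambda>p h. frechet_derivative g (at (snd p)) (snd h)"])
    fix p assume "p \<in> S"
    then have "snd p \<in> T" using assms by auto
    then have gd: "(g has_derivative frechet_derivative g (at (snd p))) (at (snd p))"
      using Ck_SucD[OF Suc.prems assms(2)] by blast
    have sd: "((\<lambda>p::'a\<times>'b. snd p) has_derivative (\<lambda>h. snd h)) (at p)"
      by (rule has_derivative_snd[OF has_derivative_ident])
    show "((\<lambda>p. g (snd p)) has_derivative (\<lambda>h. frechet_derivative g (at (snd p)) (snd h))) (at p)"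
      using has_derivative_compose[OF sd gd] by simp
  next
    fix b :: "'a \<times> 'b" assume b: "b \<in> Basis"
    show "Ck_on k S (\<lambda>p. frechet_derivative g (at (snd p)) (snd b))"
    proof (cases "snd b = 0")
      case True
      have z: "frechet_derivative g (at (snd p)) (snd b) = 0" if "p \<in> S" for p
      proof -
        have "snd p \<in> T" using that assms by auto
        then have "(g has_derivative frechet_derivative g (at (snd p))) (at (snd p))"
          using Ck_SucD[OF Suc.prems assms(2)] by blast
        then have "bounded_linear (frechet_derivative g (at (snd p)))"
          by (rule has_derivative_bounded_linear)
        then show ?thesis unfolding True by (rule linear_0[OF bounded_linear.linear])
      qed
      show ?thesis by (rule Ck_cong[OF assms(3) _ Ck_const[of k S 0]]) (simp add: z)
    next
      case False
      then have sb: "snd b \<in> Basis" using b by (auto simp: Basis_prod_def)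
      have "Ck_on k T (\<lambda>x. frechet_derivative g (at x) (snd b))"
        using Suc.prems sb by simp
      then show ?thesis by (rule Suc.IH)
    qed
  qed
qed

definition d2 :: "real^2^2 \<Rightarrow> real" where
  "d2 M = M$1$1 * M$2$2 - M$1$2 * M$2$1"

definition adj2 :: "real^2^2 \<Rightarrow> real^2^2" where
  "adj2 M = (\<chi> i j. if i = 1 then (if j = 1 then M$2$2 else - M$1$2) else (if j = 1 then - M$2$1 else M$1$1))"

definition inv2 :: "real^2^2 \<Rightarrow> real^2^2" where
  "inv2 M = (\<chi> i j. adj2 M $ i $ j * inverse (d2 M))"

lemma d2_det: "d2 M = det M"
  by (simp add: d2_def det_2)

lemma d2_sq: "d2 M \<noteq> 0 \<Longrightarrow> M$1$1 * (M$1$1 * (M$2$2 * M$2$2)) + M$1$2 * (M$1$2 * (M$2$1 * M$2$1)) \<noteq> 2 * (M$1$1 * (M$1$2 * (M$2$1 * M$2$2)))"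
proof
  assume "d2 M \<noteq> 0" "M$1$1 * (M$1$1 * (M$2$2 * M$2$2)) + M$1$2 * (M$1$2 * (M$2$1 * M$2$1)) = 2 * (M$1$1 * (M$1$2 * (M$2$1 * M$2$2)))"
  then have "(d2 M)^2 = 0" unfolding d2_def by (simp add: power2_eq_square algebra_simps)
  then show False using \<open>d2 M \<noteq> 0\<close> by simp
qed

lemma inv2_right: "d2 M \<noteq> 0 \<Longrightarrow> M ** inv2 M = mat 1"
  using d2_sq[of M] by (simp add: vec_eq_iff matrix_matrix_mult_def sum_2 forall_2 inv2_def adj2_def mat_def d2_def field_simps)

lemma inv2_left: "d2 M \<noteq> 0 \<Longrightarrow> inv2 M ** M = mat 1"
  using d2_sq[of M] by (simp add: vec_eq_iff matrix_matrix_mult_def sum_2 forall_2 inv2_def adj2_def mat_def d2_def field_simps)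

lemma matrix_inv_inv2:
  assumes "d2 M \<noteq> 0"
  shows "matrix_inv M = inv2 M"
proof -
  have ex: "M ** inv2 M = mat 1 \<and> inv2 M ** M = mat 1" using inv2_left inv2_right assms by blast
  have "matrix_inv M ** M = mat 1"
    unfolding matrix_inv_def by (rule someI2[of _ "inv2 M"]) (use ex in auto)
  have "matrix_inv M = matrix_inv M ** (M ** inv2 M)" by (simp add: ex matrix_mul_rid)
  also have "\<dots> = (matrix_inv M ** M) ** inv2 M" by (simp add: matrix_mul_assoc)
  also have "\<dots> = inv2 M" using \<open>matrix_inv M ** M = mat 1\<close> by (simp add: matrix_mul_lid)
  finally show ?thesis .
qed

lemma Ck_entry:
  fixes G :: "'a::euclidean_space \<Rightarrow> real^2^2"
  assumes "Ck_on k T G" "open T"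
  shows "Ck_on k T (\<lambda>y. G y $ i $ j)"
  using Ck_nth[OF Ck_nth[OF assms] assms(2)] .

lemma Ck_inv2:
  fixes G :: "'a::euclidean_space \<Rightarrow> real^2^2"
  assumes "Ck_on k T G" "open T" "\<And>y. y \<in> T \<Longrightarrow> d2 (G y) \<noteq> 0"
  shows "Ck_on k T (\<lambda>y. inv2 (G y))"
proof -
  have e: "Ck_on k T (\<lambda>y. G y $ i $ j)" for i j by (rule Ck_entry[OF assms(1,2)])
  have ne: "Ck_on k T (\<lambda>y. - G y $ i $ j)" for i j
    by (rule Ck_linear_out[OF bounded_linear_minus[OF bounded_linear_ident] e assms(2)])
  have d: "Ck_on k T (\<lambda>y. d2 (G y))"
    unfolding d2_def diff_conv_add_uminus
    by (rule Ck_add[OF Ck_mult[OF e e assms(2)] Ck_linear_out[OF bounded_linear_minus[OF bounded_linear_ident] Ck_mult[OF e e assms(2)] assms(2)] assms(2)])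
  have di: "Ck_on k T (\<lambda>y. inverse (d2 (G y)))" by (rule Ck_inverse[OF d assms(2,3)])
  have a: "Ck_on k T (\<lambda>y. adj2 (G y) $ i $ j)" for i j
    by (cases "i = 1"; cases "j = 1") (simp_all add: adj2_def e ne)
  have "Ck_on k T (\<lambda>y. inv2 (G y) $ i $ j)" for i j
    unfolding inv2_def by (simp add: Ck_mult[OF a di assms(2)])
  then have "Ck_on k T (\<lambda>y. inv2 (G y) $ i)" for i
    by (rule Ck_vec[OF _ assms(2)])
  then show ?thesis
    by (rule Ck_vec[OF _ assms(2)])
qed

definition DY :: "2 \<Rightarrow> ((real^2) \<times> (real^2) \<Rightarrow> real) \<Rightarrow> (real^2) \<times> (real^2) \<Rightarrow> real" where
  "DY i G p = frechet_derivative G (at p) (0, axis i 1)"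

lemma DY_has: "(G has_derivative G') (at p) \<Longrightarrow> DY i G p = G' (0, axis i 1)"
  unfolding DY_def by (metis frechet_derivative_at)

lemma DY_local:
  assumes "open T" "p \<in> T" "\<And>q. q \<in> T \<Longrightarrow> G q = H q" "G differentiable (at p)"
  shows "DY i G p = DY i H p"
  unfolding DY_def using frechet_derivative_transform_within_open[OF assms(4,1,2) assms(3)] by simp

lemma partial_DY:
  assumes "G differentiable (at (x, y))"
  shows "partial_deriv (\<lambda>z. G (x, z)) i y = DY i G (x, y)"
proof -
  have g: "(G has_derivative frechet_derivative G (at (x,y))) (at (x,y))"
    using assms frechet_derivative_works by blast
  have p: "((\<lambda>z. (x, z)) has_derivative (\<lambda>h. (0, h))) (at y)"
    by (auto intro!: derivative_eq_intros)
  have "((\<lambda>z. G (x, z)) has_derivative (\<lambda>h. frechet_derivative G (at (x,y)) (0, h))) (at y)"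
    using has_derivative_compose[OF p g] by simp
  then show ?thesis unfolding partial_deriv_def DY_def by (metis frechet_derivative_at)
qed

lemma partial_local:
  assumes "open V" "y \<in> V" "\<And>z. z \<in> V \<Longrightarrow> f z = g z" "f differentiable (at y)"
  shows "partial_deriv f i y = partial_deriv g i y"
  unfolding partial_deriv_def using frechet_derivative_transform_within_open[OF assms(4,1,2) assms(3)] by simp

lemma axis_Basis2: "axis i (1::real) \<in> Basis"
  by simp

lemma Ck_DY:
  assumes "Ck_on (Suc k) S G"
  shows "Ck_on k S (DY i G)"
proof -
  have "(0::real^2, axis i (1::real)) \<in> Basis" by (auto simp: Basis_prod_def)
  then show ?thesis using assms unfolding DY_def by simp
qed

lemma Ck_differentiable:
  assumes "Ck_on (Suc k) S G" "open S" "p \<in> S"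
  shows "G differentiable (at p)"
  using Ck_SucD[OF assms] differentiableI by blast

lemma differentiable_slice:
  assumes "G differentiable (at (x, y))"
  shows "(\<lambda>z. G (x, z)) differentiable (at y)"
proof -
  have g: "(G has_derivative frechet_derivative G (at (x,y))) (at (x,y))"
    using assms frechet_derivative_works by blast
  have p: "((\<lambda>z. (x, z)) has_derivative (\<lambda>h. (0, h))) (at y)"
    by (auto intro!: derivative_eq_intros)
  show ?thesis using has_derivative_compose[OF p g] differentiableI by blast
qed

locale L =
  fixes \<Omega> :: "(real^2) set" and A :: "real^2 \<Rightarrow> real^2^2" and lam :: real
  assumes opn: "open \<Omega>" and smA: "\<And>k. Ck_on k \<Omega> A"
    and symA: "\<And>y. y \<in> \<Omega> \<Longrightarrow> transpose (A y) = A y"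
    and lam: "lam > 0" and ell: "\<And>y \<xi>. y \<in> \<Omega> \<Longrightarrow> lam * (norm \<xi>)\<^sup>2 \<le> (A y *v \<xi>) \<bullet> \<xi>"
begin

lemma detA: assumes "y \<in> \<Omega>" shows "d2 (A y) \<noteq> 0"
proof -
  have "\<forall>\<xi>. A y *v \<xi> = 0 \<longrightarrow> \<xi> = 0"
  proof (intro allI impI)
    fix \<xi> assume "A y *v \<xi> = 0"
    then have "lam * (norm \<xi>)\<^sup>2 \<le> 0" using ell[OF assms, of \<xi>] by simp
    then show "\<xi> = 0" using lam by (simp add: mult_le_0_iff)
  qed
  then have "invertible (A y)" using matrix_left_invertible_ker invertible_left_inverse by blast
  then show ?thesis using invertible_det_nz d2_det by metis
qed

definition bb :: "2 \<Rightarrow> 2 \<Rightarrow> real^2 \<Rightarrow> real" where "bb a c y = inv2 (A y) $ a $ c"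

lemma minv: "y \<in> \<Omega> \<Longrightarrow> matrix_inv (A y) = inv2 (A y)"
  using matrix_inv_inv2 detA by blast

lemma Ck_inv2A: "Ck_on k \<Omega> (\<lambda>y. inv2 (A y))"
  by (rule Ck_inv2[OF smA opn detA])

lemma Ck_bb: "Ck_on k \<Omega> (bb a c)"
  unfolding bb_def by (rule Ck_entry[OF Ck_inv2A opn])

definition dd :: "2 \<Rightarrow> (real^2) \<times> (real^2) \<Rightarrow> real" where "dd c p = (snd p - fst p) $ c"

definition ps :: "(real^2) \<times> (real^2) \<Rightarrow> real" where
  "ps p = (\<Sum>a\<in>UNIV. \<Sum>c\<in>UNIV. bb a c (snd p) * dd c p * dd a p)"

lemma psi_ps: "y \<in> \<Omega> \<Longrightarrow> psi A x y = ps (x, y)"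
  by (simp add: psi_def ps_def minv inner_vec_def matrix_vector_mult_def sum_distrib_right dd_def bb_def mult.assoc)

lemma opn2: "open (\<Omega> \<times> \<Omega>)" using opn by (simp add: open_Times)

lemma bl_dd: "bounded_linear (dd c)"
  unfolding dd_def
  by (rule bounded_linear_compose[OF bounded_linear_vec_nth bounded_linear_sub[OF bounded_linear_snd bounded_linear_fst]])

lemma Ck_dd: "open S \<Longrightarrow> Ck_on k S (dd c)"
  by (rule Ck_blinear[OF bl_dd])

lemma Ck_bbs: "open S \<Longrightarrow> S \<subseteq> \<Omega> \<times> \<Omega> \<Longrightarrow> Ck_on k S (\<lambda>p. bb a c (snd p))"
  by (rule Ck_comp_snd[OF Ck_bb opn]) auto

lemma Ck_ps: "Ck_on k (\<Omega> \<times> \<Omega>) ps"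
  unfolding ps_def
  by (intro Ck_sum[OF _ opn2] Ck_mult[OF _ _ opn2] Ck_bbs[OF opn2] Ck_dd[OF opn2]) auto

definition S0 :: "((real^2) \<times> (real^2)) set" where "S0 = {p \<in> \<Omega> \<times> \<Omega>. fst p \<noteq> snd p}"

lemma S0_eq: "S0 = \<Omega> \<times> \<Omega> - {(x, x) | x. x \<in> \<Omega>}"
  unfolding S0_def by auto

lemma opnS0: "open S0"
proof -
  have "open {p::(real^2) \<times> (real^2). fst p \<noteq> snd p}"
    by (rule open_Collect_neq) (auto intro: continuous_on_fst continuous_on_snd continuous_on_id)
  then have "open (\<Omega> \<times> \<Omega> \<inter> {p::(real^2) \<times> (real^2). fst p \<noteq> snd p})" using opn2 by blast
  moreover have "S0 = \<Omega> \<times> \<Omega> \<inter> {p. fst p \<noteq> snd p}" unfolding S0_def by auto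
  ultimately show ?thesis by simp
qed

lemma S0_sub: "S0 \<subseteq> \<Omega> \<times> \<Omega>" unfolding S0_def by auto

lemma psi_lower:
  assumes "y \<in> \<Omega>"
  shows "psi A x y \<ge> lam * (norm (inv2 (A y) *v (y - x)))\<^sup>2"
    and "A y *v (inv2 (A y) *v (y - x)) = y - x"
proof -
  let ?\<xi> = "inv2 (A y) *v (y - x)"
  show e: "A y *v ?\<xi> = y - x"
    by (simp add: matrix_vector_mul_assoc inv2_right[OF detA[OF assms]])
  have "psi A x y = ?\<xi> \<bullet> (y - x)" by (simp add: psi_def minv[OF assms])
  also have "\<dots> = (A y *v ?\<xi>) \<bullet> ?\<xi>" by (simp add: e inner_commute)
  finally show "psi A x y \<ge> lam * (norm ?\<xi>)\<^sup>2" using ell[OF assms] by simp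
qed

lemma psi_pos:
  assumes "y \<in> \<Omega>" "x \<noteq> y"
  shows "psi A x y > 0"
proof -
  let ?\<xi> = "inv2 (A y) *v (y - x)"
  have "?\<xi> \<noteq> 0" using psi_lower(2)[OF assms(1), of x] assms(2) by auto
  then have "lam * (norm ?\<xi>)\<^sup>2 > 0" using lam by simp
  then show ?thesis using psi_lower(1)[OF assms(1), of x] by linarith
qed

lemma ps_pos: "p \<in> S0 \<Longrightarrow> ps p > 0"
  unfolding S0_def using psi_pos psi_ps by (metis (mono_tags, lifting) mem_Collect_eq mem_Times_iff prod.collapse)

definition Fl :: "(real^2) \<times> (real^2) \<Rightarrow> real" where
  "Fl p = psi A (fst p) (snd p) * ln (psi A (fst p) (snd p))"

lemma Fl_ps: "p \<in> S0 \<Longrightarrow> Fl p = ps p * ln (ps p)"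
  unfolding Fl_def S0_def using psi_ps by (metis (mono_tags, lifting) mem_Collect_eq mem_Times_iff prod.collapse)

lemma Ck_Fl: "Ck_on k S0 Fl"
proof -
  have p: "Ck_on k S0 ps" by (rule Ck_subset[OF Ck_ps opnS0 S0_sub opn2])
  have h: "Ck_on k S0 (\<lambda>p. ps p * ln (ps p))"
    by (rule Ck_mult[OF p Ck_ln[OF p opnS0 ps_pos] opnS0])
  show ?thesis by (rule Ck_cong[OF opnS0 _ h]) (simp add: Fl_ps)
qed

definition Hk :: "2 \<Rightarrow> (real^2) \<times> (real^2) \<Rightarrow> real" where
  "Hk i p = (\<Sum>k\<in>UNIV. A (snd p) $ i $ k * DY k Fl p)"

lemma Ck_As: "open S \<Longrightarrow> S \<subseteq> \<Omega> \<times> \<Omega> \<Longrightarrow> Ck_on k S (\<lambda>p. A (snd p) $ i $ j)"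
  by (rule Ck_comp_snd[OF Ck_entry[OF smA opn] opn]) auto

lemma Ck_Hk: "Ck_on k S0 (Hk i)"
  unfolding Hk_def
  by (intro Ck_sum[OF _ opnS0] Ck_mult[OF _ _ opnS0] Ck_As[OF opnS0 S0_sub] Ck_DY Ck_Fl)

definition E2 :: "(real^2) \<times> (real^2) \<Rightarrow> real^2^2" where
  "E2 p = (\<chi> i j. DY i (DY j Fl) p - ((1 / sqrt 2) * (\<Sum>i\<in>UNIV. DY i (Hk i) p)) * ((1 / sqrt 2) * bb i j (snd p)))"

lemma Ck_E2: "Ck_on k S0 E2"
proof -
  have c: "Ck_on k S0 (\<lambda>p. ((1 / sqrt 2) * (\<Sum>i\<in>UNIV. DY i (Hk i) p)) * ((1 / sqrt 2) * bb i j (snd p)))" for i j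
    by (intro Ck_mult[OF _ _ opnS0] Ck_const Ck_sum[OF _ opnS0] Ck_DY Ck_Hk Ck_bbs[OF opnS0 S0_sub])
  have "Ck_on k S0 (\<lambda>p. E2 p $ i $ j)" for i j
  proof -
    have "(\<lambda>p. E2 p $ i $ j) = (\<lambda>p. DY i (DY j Fl) p + - (((1 / sqrt 2) * (\<Sum>i\<in>UNIV. DY i (Hk i) p)) * ((1 / sqrt 2) * bb i j (snd p))))"
      by (simp add: E2_def fun_eq_iff)
    then show ?thesis
      using Ck_add[OF Ck_DY[OF Ck_DY[OF Ck_Fl]] Ck_linear_out[OF bounded_linear_minus[OF bounded_linear_ident] c opnS0] opnS0] by simp
  qed
  then have "Ck_on k S0 (\<lambda>p. E2 p $ i)" for i by (rule Ck_vec[OF _ opnS0])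
  then show ?thesis by (rule Ck_vec[OF _ opnS0])
qed

lemma Fl_diff: "p \<in> S0 \<Longrightarrow> Fl differentiable (at p)"
  using Ck_differentiable[OF Ck_Fl opnS0] by blast

lemma DYFl_diff: "p \<in> S0 \<Longrightarrow> DY j Fl differentiable (at p)"
  using Ck_differentiable[OF Ck_DY[OF Ck_Fl] opnS0] by blast

lemma Hk_diff: "p \<in> S0 \<Longrightarrow> Hk i differentiable (at p)"
  using Ck_differentiable[OF Ck_Hk opnS0] by blast

lemma slice_open: "x \<in> \<Omega> \<Longrightarrow> open (\<Omega> - {x}) \<and> (\<forall>z \<in> \<Omega> - {x}. (x, z) \<in> S0)"
  using opn unfolding S0_def by auto

lemma hessian_eq:
  assumes "x \<in> \<Omega>" "y \<in> \<Omega>" "x \<noteq> y"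
  shows "hessian (\<lambda>z. psi A x z * ln (psi A x z)) y = (\<chi> i j. DY i (DY j Fl) (x, y))"
proof -
  have fl: "(\<lambda>z. psi A x z * ln (psi A x z)) = (\<lambda>z. Fl (x, z))" by (simp add: Fl_def)
  have V: "open (\<Omega> - {x})" "y \<in> \<Omega> - {x}" "\<And>z. z \<in> \<Omega> - {x} \<Longrightarrow> (x, z) \<in> S0"
    using slice_open[OF assms(1)] assms by auto
  have xy: "(x, y) \<in> S0" using V by auto
  have "partial_deriv (\<lambda>z. partial_deriv (\<lambda>w. Fl (x, w)) j z) i y = DY i (DY j Fl) (x, y)" for i j
  proof -
    have "partial_deriv (\<lambda>z. DY j Fl (x, z)) i y = partial_deriv (\<lambda>z. partial_deriv (\<lambda>w. Fl (x, w)) j z) i y"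
      by (rule partial_local[OF V(1,2)]) (auto simp: partial_DY[OF Fl_diff, OF V(3)] intro: differentiable_slice DYFl_diff xy)
    moreover have "partial_deriv (\<lambda>z. DY j Fl (x, z)) i y = DY i (DY j Fl) (x, y)"
      by (rule partial_DY[OF DYFl_diff[OF xy]])
    ultimately show ?thesis by simp
  qed
  then show ?thesis unfolding fl hessian_def by simp
qed

lemma div_eq:
  assumes "x \<in> \<Omega>" "y \<in> \<Omega>" "x \<noteq> y"
  shows "divergence (\<lambda>z. A z *v gradient (\<lambda>w. psi A x w * ln (psi A x w)) z) y = (\<Sum>i\<in>UNIV. DY i (Hk i) (x, y))"
proof -
  have fl: "(\<lambda>z. psi A x z * ln (psi A x z)) = (\<lambda>z. Fl (x, z))" by (simp add: Fl_def)
  have V: "open (\<Omega> - {x})" "y \<in> \<Omega> - {x}" "\<And>z. z \<in> \<Omega> - {x} \<Longrightarrow> (x, z) \<in> S0"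
    using slice_open[OF assms(1)] assms by auto
  have xy: "(x, y) \<in> S0" using V by auto
  have "partial_deriv (\<lambda>z. (A z *v gradient (\<lambda>w. Fl (x, w)) z) $ i) i y = DY i (Hk i) (x, y)" for i
  proof -
    have hd: "(\<lambda>z. Hk i (x,z)) differentiable (at y)" by (rule differentiable_slice[OF Hk_diff[OF xy]])
    have "partial_deriv (\<lambda>z. Hk i (x, z)) i y = partial_deriv (\<lambda>z. (A z *v gradient (\<lambda>w. Fl (x, w)) z) $ i) i y"
      by (rule partial_local[OF V(1,2) _ hd])
         (auto simp: Hk_def matrix_vector_mult_def gradient_def partial_DY[OF Fl_diff, OF V(3)])
    moreover have "partial_deriv (\<lambda>z. Hk i (x, z)) i y = DY i (Hk i) (x, y)"
      by (rule partial_DY[OF Hk_diff[OF xy]])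
    ultimately show ?thesis by simp
  qed
  then show ?thesis unfolding fl divergence_def by simp
qed

end

lemma has_snd:
  fixes p :: "'a::real_normed_vector \<times> 'b::real_normed_vector"
  assumes "g differentiable (at (snd p))"
  shows "((\<lambda>q. g (snd q)) has_derivative (\<lambda>h. frechet_derivative g (at (snd p)) (snd h))) (at p)"
proof -
  have gd: "(g has_derivative frechet_derivative g (at (snd p))) (at (snd p))"
    using assms frechet_derivative_works by blast
  have sd: "((\<lambda>p::'a::real_normed_vector \<times> 'b. snd p) has_derivative (\<lambda>h. snd h)) (at p)"
    by (rule has_derivative_snd[OF has_derivative_ident])
  show ?thesis using has_derivative_compose[OF sd gd] by simp
qed

lemma has_fd:
  assumes "g differentiable (at p)"
  shows "(g has_derivative frechet_derivative g (at p)) (at p)"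
  using assms frechet_derivative_works by blast

lemma DY_fd: "DY i g p = frechet_derivative g (at p) (0, axis i 1)"
  by (simp add: DY_def)

context L
begin

lemma has_dd: "(dd c has_derivative dd c) (at p)"
  by (rule bounded_linear_imp_has_derivative[OF bl_dd])

lemma dd_e: "dd c (0, axis i 1) = axis i 1 $ c"
  by (simp add: dd_def)

lemma bb_diff: "y \<in> \<Omega> \<Longrightarrow> bb a c differentiable (at y)"
  using Ck_differentiable[OF Ck_bb opn] by blast

definition pbb :: "2 \<Rightarrow> 2 \<Rightarrow> 2 \<Rightarrow> real^2 \<Rightarrow> real" where
  "pbb j a c y = partial_deriv (bb a c) j y"

lemma Ck_pbb: "Ck_on k \<Omega> (pbb j a c)"
proof -
  have "(axis j (1::real)) \<in> Basis" by simp
  then show ?thesis unfolding pbb_def partial_deriv_def using Ck_bb[of "Suc k"] by simp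
qed

definition ppbb :: "2 \<Rightarrow> 2 \<Rightarrow> 2 \<Rightarrow> 2 \<Rightarrow> real^2 \<Rightarrow> real" where
  "ppbb i j a c y = partial_deriv (pbb j a c) i y"

lemma Ck_ppbb: "Ck_on k \<Omega> (ppbb i j a c)"
proof -
  have "(axis i (1::real)) \<in> Basis" by simp
  then show ?thesis unfolding ppbb_def partial_deriv_def using Ck_pbb[of "Suc k"] by simp
qed

lemma pbb_diff: "y \<in> \<Omega> \<Longrightarrow> pbb j a c differentiable (at y)"
  using Ck_differentiable[OF Ck_pbb opn] by blast

definition Pf :: "2 \<Rightarrow> (real^2) \<times> (real^2) \<Rightarrow> real" where
  "Pf j p = (\<Sum>a\<in>UNIV. \<Sum>c\<in>UNIV. pbb j a c (snd p) * dd c p * dd a p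
       + bb a c (snd p) * (axis j 1 $ c) * dd a p + bb a c (snd p) * dd c p * (axis j 1 $ a))"

lemma DY_ps:
  assumes "p \<in> \<Omega> \<times> \<Omega>"
  shows "DY j ps p = Pf j p"
proof -
  have y: "snd p \<in> \<Omega>" using assms by auto
  have "(ps has_derivative (\<lambda>h. \<Sum>a\<in>UNIV. \<Sum>c\<in>UNIV.
      (bb a c (snd p) * dd c p) * dd a h + (bb a c (snd p) * dd c h + frechet_derivative (bb a c) (at (snd p)) (snd h) * dd c p) * dd a p)) (at p)"
    unfolding ps_def
    by (intro has_derivative_sum has_derivative_mult has_snd has_dd bb_diff y)
  then show ?thesis
    by (simp add: DY_has dd_e Pf_def pbb_def partial_deriv_def algebra_simps)
qed

definition Qf :: "2 \<Rightarrow> 2 \<Rightarrow> (real^2) \<times> (real^2) \<Rightarrow> real" where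
  "Qf i j p = (\<Sum>a\<in>UNIV. \<Sum>c\<in>UNIV. 
       (ppbb i j a c (snd p) * dd c p * dd a p + pbb j a c (snd p) * (axis i 1 $ c) * dd a p + pbb j a c (snd p) * dd c p * (axis i 1 $ a))
     + (pbb i a c (snd p) * (axis j 1 $ c) * dd a p + bb a c (snd p) * (axis j 1 $ c) * (axis i 1 $ a))
     + (pbb i a c (snd p) * dd c p * (axis j 1 $ a) + bb a c (snd p) * (axis i 1 $ c) * (axis j 1 $ a)))"

lemma DY_Pf:
  assumes "p \<in> \<Omega> \<times> \<Omega>"
  shows "DY i (Pf j) p = Qf i j p"
proof -
  have y: "snd p \<in> \<Omega>" using assms by auto
  have "(Pf j has_derivative (\<lambda>h. \<Sum>a\<in>UNIV. \<Sum>c\<in>UNIV.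
      ((pbb j a c (snd p) * dd c p) * dd a h + (pbb j a c (snd p) * dd c h + frechet_derivative (pbb j a c) (at (snd p)) (snd h) * dd c p) * dd a p)
    + ((bb a c (snd p) * (axis j 1 $ c)) * dd a h + (bb a c (snd p) * 0 + frechet_derivative (bb a c) (at (snd p)) (snd h) * (axis j 1 $ c)) * dd a p)
    + ((bb a c (snd p) * dd c p) * 0 + (bb a c (snd p) * dd c h + frechet_derivative (bb a c) (at (snd p)) (snd h) * dd c p) * (axis j 1 $ a)))) (at p)"
    unfolding Pf_def
    by (intro has_derivative_sum has_derivative_add has_derivative_mult has_snd has_dd bb_diff pbb_diff y has_derivative_const)
  then show ?thesis
    by (simp add: DY_has dd_e Qf_def pbb_def ppbb_def partial_deriv_def algebra_simps)
qed

lemma Ck_Pf: "Ck_on k (\<Omega> \<times> \<Omega>) (Pf j)"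
  unfolding Pf_def
  by (intro Ck_sum[OF _ opn2] Ck_add[OF _ _ opn2] Ck_mult[OF _ _ opn2] Ck_comp_snd[OF Ck_pbb opn opn2] Ck_comp_snd[OF Ck_bb opn opn2] Ck_dd[OF opn2] Ck_const) auto

lemma DYps_eq: "p \<in> \<Omega> \<times> \<Omega> \<Longrightarrow> DY i (DY j ps) p = Qf i j p"
proof -
  assume p: "p \<in> \<Omega> \<times> \<Omega>"
  have "DY i (Pf j) p = DY i (DY j ps) p"
    by (rule DY_local[OF opn2 p]) (auto simp: DY_ps intro: Ck_differentiable[OF Ck_Pf opn2 p])
  then show ?thesis using DY_Pf[OF p] by simp
qed

end

lemma E_alg:
  fixes Am pA b R Q :: "2 \<Rightarrow> 2 \<Rightarrow> real" and P :: "2 \<Rightarrow> real" and L s :: real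
  assumes Q: "\<And>i j. Q i j = b i j + b j i + R i j" and bs: "\<And>i j. b i j = b j i"
    and tr: "(\<Sum>i\<in>UNIV. \<Sum>k\<in>UNIV. Am i k * (b i k + b k i)) = 4"
  shows "Q i j * L + P j * (P i / s)
      - ((1 / sqrt 2) * (\<Sum>i'\<in>UNIV. \<Sum>k\<in>UNIV. Am i' k * (Q i' k * L + P k * (P i' / s)) + pA i' k * (P k * L))) * ((1 / sqrt 2) * b i j)
    = P i * P j / s + L * R i j - 1/2 * b i j * (\<Sum>i'\<in>UNIV. \<Sum>k\<in>UNIV. Am i' k * (P k * P i' / s) + Am i' k * R i' k * L + pA i' k * P k * L)"
proof -
  have h: "(1 / sqrt 2) * X * ((1 / sqrt 2) * Y) = 1/2 * X * Y" for X Y :: real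
    by (simp add: field_simps)
  have "(\<Sum>i'\<in>UNIV. \<Sum>k\<in>UNIV. Am i' k * (Q i' k * L + P k * (P i' / s)) + pA i' k * (P k * L))
     = (\<Sum>i'\<in>UNIV. \<Sum>k\<in>UNIV. Am i' k * (P k * P i' / s) + Am i' k * R i' k * L + pA i' k * P k * L)
       + L * (\<Sum>i\<in>UNIV. \<Sum>k\<in>UNIV. Am i k * (b i k + b k i))"
    unfolding Q by (simp add: sum_2 algebra_simps)
  then have "(\<Sum>i'\<in>UNIV. \<Sum>k\<in>UNIV. Am i' k * (Q i' k * L + P k * (P i' / s)) + pA i' k * (P k * L))
     = (\<Sum>i'\<in>UNIV. \<Sum>k\<in>UNIV. Am i' k * (P k * P i' / s) + Am i' k * R i' k * L + pA i' k * P k * L) + 4 * L"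
    using tr by simp
  then show ?thesis unfolding h Q using bs[of j i] by (simp add: algebra_simps)
qed

context L
begin

definition pA :: "2 \<Rightarrow> 2 \<Rightarrow> real^2 \<Rightarrow> real" where
  "pA i k y = partial_deriv (\<lambda>y. A y $ i $ k) i y"

lemma ps_diff: "p \<in> \<Omega> \<times> \<Omega> \<Longrightarrow> ps differentiable (at p)"
  using Ck_differentiable[OF Ck_ps opn2] by blast

lemma DYps_diff: "p \<in> \<Omega> \<times> \<Omega> \<Longrightarrow> DY j ps differentiable (at p)"
  using Ck_differentiable[OF Ck_DY[OF Ck_ps] opn2] by blast

lemma S0_in: "p \<in> S0 \<Longrightarrow> p \<in> \<Omega> \<times> \<Omega>" using S0_sub by auto

definition FD :: "2 \<Rightarrow> (real^2) \<times> (real^2) \<Rightarrow> real" where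
  "FD k p = DY k ps p * (ln (ps p) + 1)"

lemma DYFl:
  assumes p: "p \<in> S0"
  shows "DY k Fl p = FD k p"
proof -
  have "DY k Fl p = DY k (\<lambda>q. ps q * ln (ps q)) p"
    by (rule DY_local[OF opnS0 p]) (auto simp: Fl_ps intro: Fl_diff p)
  also have "\<dots> = FD k p"
  proof -
    have "((\<lambda>q. ps q * ln (ps q)) has_derivative (\<lambda>h. ps p * (frechet_derivative ps (at p) h * inverse (ps p)) + frechet_derivative ps (at p) h * ln (ps p))) (at p)"
      by (intro has_derivative_mult has_derivative_ln has_fd ps_diff S0_in p ps_pos)
    from DY_has[OF this, of k] show ?thesis using ps_pos[OF p] by (simp add: FD_def DY_fd field_simps)
  qed
  finally show ?thesis .
qed

lemma DY2Fl:
  assumes p: "p \<in> S0"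
  shows "DY i (DY j Fl) p = Qf i j p * (ln (ps p) + 1) + DY j ps p * (DY i ps p / ps p)"
proof -
  have "DY i (DY j Fl) p = DY i (FD j) p"
    by (rule DY_local[OF opnS0 p]) (auto simp: DYFl intro: DYFl_diff p)
  also have "\<dots> = Qf i j p * (ln (ps p) + 1) + DY j ps p * (DY i ps p / ps p)"
  proof -
    have "(FD j has_derivative (\<lambda>h. DY j ps p * (frechet_derivative ps (at p) h * inverse (ps p) + 0) + frechet_derivative (DY j ps) (at p) h * (ln (ps p) + 1))) (at p)"
      unfolding FD_def
      by (intro has_derivative_mult has_derivative_add has_derivative_ln has_fd ps_diff DYps_diff S0_in p ps_pos has_derivative_const)
    from DY_has[OF this, of i] show ?thesis using ps_pos[OF p] DYps_eq[OF S0_in[OF p], of i j]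
      by (simp add: DY_fd field_simps)
  qed
  finally show ?thesis .
qed

lemma Aent_diff: "y \<in> \<Omega> \<Longrightarrow> (\<lambda>y. A y $ i $ k) differentiable (at y)"
  using Ck_differentiable[OF Ck_entry[OF smA opn] opn] by blast

lemma DYHk:
  assumes p: "p \<in> S0"
  shows "DY i (Hk i) p = (\<Sum>k\<in>UNIV. A (snd p) $ i $ k * DY i (DY k Fl) p + pA i k (snd p) * DY k Fl p)"
proof -
  have y: "snd p \<in> \<Omega>" using p S0_sub by auto
  have "(Hk i has_derivative (\<lambda>h. \<Sum>k\<in>UNIV. A (snd p) $ i $ k * frechet_derivative (DY k Fl) (at p) h + frechet_derivative (\<lambda>y. A y $ i $ k) (at (snd p)) (snd h) * DY k Fl p)) (at p)"
    unfolding Hk_def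
    by (intro has_derivative_sum has_derivative_mult has_snd[where g="\<lambda>y. A y $ i $ _"] has_fd DYFl_diff p Aent_diff y)
  from DY_has[OF this, of i] show ?thesis by (simp add: DY_fd pA_def partial_deriv_def)
qed

lemma bb_sym: "y \<in> \<Omega> \<Longrightarrow> bb a c y = bb c a y"
proof -
  assume y: "y \<in> \<Omega>"
  have "transpose (A y) $ 1 $ 2 = A y $ 2 $ 1" by (simp add: transpose_def)
  then have "A y $ 1 $ 2 = A y $ 2 $ 1" using symA[OF y] by simp
  then show ?thesis
    using exhaust_2[of a] exhaust_2[of c] by (auto simp: bb_def inv2_def adj2_def)
qed

lemma trace4: "y \<in> \<Omega> \<Longrightarrow> (\<Sum>i\<in>UNIV. \<Sum>k\<in>UNIV. A y $ i $ k * (bb i k y + bb k i y)) = 4"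
proof -
  assume y: "y \<in> \<Omega>"
  have m: "(\<Sum>k\<in>UNIV. A y $ i $ k * bb k j y) = (if i = j then 1 else 0)" for i j
    using inv2_right[OF detA[OF y]] unfolding bb_def
    by (auto simp: vec_eq_iff matrix_matrix_mult_def mat_def)
  have "(\<Sum>i\<in>UNIV. \<Sum>k\<in>UNIV. A y $ i $ k * (bb i k y + bb k i y)) = (\<Sum>i\<in>UNIV. 2 * (\<Sum>k\<in>UNIV. A y $ i $ k * bb k i y))"
    using bb_sym[OF y] by (simp add: sum_distrib_left algebra_simps)
  also have "\<dots> = 4" by (simp add: m sum_2)
  finally show ?thesis .
qed

definition Rf :: "2 \<Rightarrow> 2 \<Rightarrow> (real^2) \<times> (real^2) \<Rightarrow> real" where
  "Rf i j p = Qf i j p - bb i j (snd p) - bb j i (snd p)"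

lemma E2_expr:
  assumes p: "p \<in> S0"
  shows "E2 p $ i $ j = DY i ps p * DY j ps p / ps p + (ln (ps p) + 1) * Rf i j p
     - 1/2 * bb i j (snd p) * (\<Sum>i'\<in>UNIV. \<Sum>k\<in>UNIV. A (snd p) $ i' $ k * (DY k ps p * DY i' ps p / ps p)
          + A (snd p) $ i' $ k * Rf i' k p * (ln (ps p) + 1) + pA i' k (snd p) * DY k ps p * (ln (ps p) + 1))"
  (is "_ = ?rhs")
proof -
  have y: "snd p \<in> \<Omega>" using p S0_sub by auto
  have "E2 p $ i $ j = Qf i j p * (ln (ps p) + 1) + DY j ps p * (DY i ps p / ps p)
      - ((1 / sqrt 2) * (\<Sum>i'\<in>UNIV. \<Sum>k\<in>UNIV. A (snd p) $ i' $ k * (Qf i' k p * (ln (ps p) + 1) + DY k ps p * (DY i' ps p / ps p)) + pA i' k (snd p) * (DY k ps p * (ln (ps p) + 1)))) * ((1 / sqrt 2) * bb i j (snd p))"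
    by (simp add: E2_def DY2Fl[OF p] DYHk[OF p] DYFl[OF p] FD_def)
  also have "\<dots> = ?rhs"
    by (rule E_alg[where b="\<lambda>i j. bb i j (snd p)" and R="\<lambda>i j. Rf i j p"])
       (simp add: Rf_def, rule bb_sym[OF y], rule trace4[OF y])
  finally show ?thesis .
qed

end

lemma abs_mult_le: "\<bar>x\<bar> \<le> X \<Longrightarrow> \<bar>y\<bar> \<le> Y \<Longrightarrow> \<bar>x * y\<bar> \<le> X * (Y::real)"
  by (simp add: abs_mult mult_mono')

lemma abs_mult3_le: "\<bar>x\<bar> \<le> X \<Longrightarrow> \<bar>y\<bar> \<le> Y \<Longrightarrow> \<bar>z\<bar> \<le> Z \<Longrightarrow> \<bar>x * y * z\<bar> \<le> X * Y * (Z::real)"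
  by (rule abs_mult_le[OF abs_mult_le]) auto

lemma sum4_bound:
  fixes f :: "2 \<Rightarrow> 2 \<Rightarrow> real"
  assumes "\<And>a c. \<bar>f a c\<bar> \<le> M"
  shows "\<bar>\<Sum>a\<in>UNIV. \<Sum>c\<in>UNIV. f a c\<bar> \<le> 4 * M"
proof -
  have "\<And>a c. - M \<le> f a c \<and> f a c \<le> M" using assms abs_le_iff by (metis minus_le_iff)
  then show ?thesis by (simp add: sum_2 abs_le_iff) (smt (verit))
qed

lemma r_ln: "(r::real) > 0 \<Longrightarrow> r * \<bar>ln r\<bar> \<le> 1 + r\<^sup>2"
proof (cases "r \<ge> 1")
  case True
  assume r: "r > 0"
  have "0 \<le> ln r" using True by (rule ln_ge_zero)
  have "ln r \<le> r - 1" using r by (rule ln_le_minus_one)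
  then have "r * \<bar>ln r\<bar> \<le> r * (r - 1)" using r \<open>0 \<le> ln r\<close> by (simp add: mult_left_mono)
  then show ?thesis using r by (simp add: power2_eq_square algebra_simps)
next
  case False
  assume r: "r > 0"
  have "ln (1 / r) \<le> 1 / r - 1" using r ln_le_minus_one by simp
  then have "- ln r \<le> 1 / r - 1" using r by (simp add: ln_div)
  moreover have "ln r \<le> 0" using False r by simp
  ultimately have "r * (- ln r) \<le> r * (1 / r - 1)" using r by (intro mult_left_mono) auto
  then have "r * \<bar>ln r\<bar> \<le> r * (1 / r - 1)" using \<open>ln r \<le> 0\<close> by simp
  also have "\<dots> = 1 - r" using r by (simp add: field_simps)
  finally show ?thesis using r by (smt (verit) zero_le_power2)
qed

lemma rL_bound:
  fixes c U r s :: real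
  assumes "c > 0" "U > 0" "r > 0" "c * r\<^sup>2 \<le> s" "s \<le> U * r\<^sup>2" "r \<le> Rm"
  shows "r * \<bar>ln s + 1\<bar> \<le> Rm * (\<bar>ln c\<bar> + \<bar>ln U\<bar> + 1) + 2 * (1 + Rm\<^sup>2)"
proof -
  have s: "s > 0" using assms by (smt (verit) mult_pos_pos zero_less_power)
  have l1: "ln c + 2 * ln r \<le> ln s"
  proof -
    have "ln (c * r\<^sup>2) \<le> ln s" using assms s by simp
    then show ?thesis using assms by (simp add: ln_mult ln_realpow)
  qed
  have l2: "ln s \<le> ln U + 2 * ln r"
  proof -
    have "ln s \<le> ln (U * r\<^sup>2)" using assms s by simp
    then show ?thesis using assms by (simp add: ln_mult ln_realpow)
  qed
  have "\<bar>ln s + 1\<bar> \<le> \<bar>ln c\<bar> + \<bar>ln U\<bar> + 1 + 2 * \<bar>ln r\<bar>" using l1 l2 by linarith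
  then have "r * \<bar>ln s + 1\<bar> \<le> r * (\<bar>ln c\<bar> + \<bar>ln U\<bar> + 1 + 2 * \<bar>ln r\<bar>)"
    using assms(3) by (intro mult_left_mono) auto
  also have "\<dots> = r * (\<bar>ln c\<bar> + \<bar>ln U\<bar> + 1) + 2 * (r * \<bar>ln r\<bar>)" by (simp add: algebra_simps)
  also have "\<dots> \<le> Rm * (\<bar>ln c\<bar> + \<bar>ln U\<bar> + 1) + 2 * (1 + Rm\<^sup>2)"
  proof -
    have "r * (\<bar>ln c\<bar> + \<bar>ln U\<bar> + 1) \<le> Rm * (\<bar>ln c\<bar> + \<bar>ln U\<bar> + 1)"
      using assms by (simp add: mult_right_mono)
    moreover have "r * \<bar>ln r\<bar> \<le> 1 + Rm\<^sup>2"
      using r_ln[OF assms(3)] assms power_mono[of r Rm 2] by linarith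
    ultimately show ?thesis by (smt (verit))
  qed
  finally show ?thesis .
qed

lemma E_bound:
  fixes Am pA b R :: "2 \<Rightarrow> 2 \<Rightarrow> real" and P :: "2 \<Rightarrow> real" and s L r B C c K :: real
  assumes Am: "\<And>i k. \<bar>Am i k\<bar> \<le> B" and pA: "\<And>i k. \<bar>pA i k\<bar> \<le> B" and b: "\<And>i k. \<bar>b i k\<bar> \<le> B"
    and P: "\<And>k. \<bar>P k\<bar> \<le> C * r" and R: "\<And>i k. \<bar>R i k\<bar> \<le> C * r"
    and s: "c * r\<^sup>2 \<le> s" and c: "c > 0" and r: "r > 0" and L: "r * \<bar>L\<bar> \<le> K" and B: "B \<ge> 0" and C: "C \<ge> 0"
  shows "\<bar>P i * P j / s + L * R i j - 1/2 * b i j * (\<Sum>i'\<in>UNIV. \<Sum>k\<in>UNIV. Am i' k * (P k * P i' / s) + Am i' k * R i' k * L + pA i' k * P k * L)\<bar>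
     \<le> C\<^sup>2 / c + C * K + 2 * B * (B * (C\<^sup>2 / c) + 2 * (B * (C * K)))"
proof -
  have spos: "s > 0" using s c r by (smt (verit) mult_pos_pos zero_less_power)
  have pp: "\<bar>P k * P i' / s\<bar> \<le> C\<^sup>2 / c" for k i'
  proof -
    have "\<bar>P k * P i'\<bar> \<le> (C * r) * (C * r)" by (rule abs_mult_le[OF P P])
    then have "\<bar>P k * P i'\<bar> / s \<le> (C * r) * (C * r) / (c * r\<^sup>2)"
      using spos s c r by (meson abs_ge_zero divide_mono frac_le mult_pos_pos zero_less_power order_trans)
    also have "\<dots> = C\<^sup>2 / c" using r c by (simp add: power2_eq_square field_simps)
    finally show ?thesis using spos by simp
  qed
  have rl: "\<bar>X * L\<bar> \<le> C * K" if "\<bar>X\<bar> \<le> C * r" for X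
  proof -
    have "\<bar>X * L\<bar> \<le> C * r * \<bar>L\<bar>" using that by (simp add: abs_mult mult_right_mono)
    also have "\<dots> \<le> C * K" using L C by (simp add: mult_left_mono mult.assoc)
    finally show ?thesis .
  qed
  have tm: "\<bar>Am i' k * (P k * P i' / s) + Am i' k * R i' k * L + pA i' k * P k * L\<bar> \<le> B * (C\<^sup>2 / c) + 2 * (B * (C * K))" for i' k
  proof -
    have t1: "\<bar>Am i' k * (P k * P i' / s)\<bar> \<le> B * (C\<^sup>2 / c)" by (rule abs_mult_le[OF Am pp])
    have t2: "\<bar>Am i' k * R i' k * L\<bar> \<le> B * (C * K)" using abs_mult_le[OF Am rl[OF R]] by (simp add: mult.assoc)
    have t3: "\<bar>pA i' k * P k * L\<bar> \<le> B * (C * K)" using abs_mult_le[OF pA rl[OF P]] by (simp add: mult.assoc)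
    show ?thesis using t1 t2 t3 by (smt (verit))
  qed
  have sm: "\<bar>\<Sum>i'\<in>UNIV. \<Sum>k\<in>UNIV. Am i' k * (P k * P i' / s) + Am i' k * R i' k * L + pA i' k * P k * L\<bar> \<le> 4 * (B * (C\<^sup>2 / c) + 2 * (B * (C * K)))"
    by (rule sum4_bound[OF tm])
  define X where "X = B * (C\<^sup>2 / c) + 2 * (B * (C * K))"
  define S where "S = (\<Sum>i'\<in>UNIV. \<Sum>k\<in>UNIV. Am i' k * (P k * P i' / s) + Am i' k * R i' k * L + pA i' k * P k * L)"
  have sm': "\<bar>S\<bar> \<le> 4 * X" using sm unfolding S_def X_def .
  have f1: "\<bar>1/2 * b i j * S\<bar> \<le> 1/2 * B * (4 * X)"
    using abs_mult_le[OF abs_mult_le[of "1/2" "1/2" "b i j" B] sm'] b by simp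
  have e: "1/2 * B * (4 * X) = 2 * B * X" by simp
  have f2: "\<bar>P i * P j / s\<bar> \<le> C\<^sup>2 / c" using pp[of i j] by (simp add: mult.commute)
  have f3: "\<bar>L * R i j\<bar> \<le> C * K" using rl[OF R[of i j]] by (simp add: mult.commute)
  have "\<bar>P i * P j / s + L * R i j - 1/2 * b i j * S\<bar> \<le> C\<^sup>2 / c + C * K + 2 * B * X"
    using f1 f2 f3 unfolding e by linarith
  then show ?thesis unfolding S_def X_def .
qed

lemma le_sum_nonneg: "(\<And>i. 0 \<le> f i) \<Longrightarrow> f a \<le> (\<Sum>i\<in>(UNIV::'a::finite set). (f i::real))"
  by (rule member_le_sum) auto

lemma delta_le: "\<bar>axis j (1::real) $ c\<bar> \<le> 1"
  by (simp add: axis_def)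

context L
begin

lemma Ck_pA: "Ck_on k \<Omega> (pA i j)"
proof -
  have "(axis i (1::real)) \<in> Basis" by simp
  then show ?thesis unfolding pA_def partial_deriv_def using Ck_entry[OF smA opn, of "Suc k" i j] by simp
qed

definition gB :: "2 \<Rightarrow> 2 \<Rightarrow> real^2 \<Rightarrow> real" where
  "gB a c y = \<bar>bb a c y\<bar> + (\<Sum>j\<in>UNIV. \<bar>pbb j a c y\<bar>) + (\<Sum>i\<in>UNIV. \<Sum>j\<in>UNIV. \<bar>ppbb i j a c y\<bar>)"

definition gA :: "2 \<Rightarrow> 2 \<Rightarrow> real^2 \<Rightarrow> real" where
  "gA i k y = \<bar>A y $ i $ k\<bar> + \<bar>pA i k y\<bar>"

definition Phi :: "real^2 \<Rightarrow> real" where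
  "Phi y = (\<Sum>a\<in>UNIV. \<Sum>c\<in>UNIV. gB a c y) + (\<Sum>i\<in>UNIV. \<Sum>k\<in>UNIV. gA i k y)"

lemma cont_Phi: "continuous_on \<Omega> Phi"
proof -
  have c1: "continuous_on \<Omega> (bb a c)" "continuous_on \<Omega> (pbb j a c)" "continuous_on \<Omega> (ppbb i j a c)"
     "continuous_on \<Omega> (\<lambda>y. A y $ i $ k)" "continuous_on \<Omega> (pA i k)" for a c i j k
    using Ck_bb[of 0] Ck_pbb[of 0] Ck_ppbb[of 0] Ck_entry[OF smA opn, of 0] Ck_pA[of 0] by auto
  show ?thesis unfolding Phi_def gB_def gA_def
    by (intro continuous_intros c1)
qed

lemma gB_nn: "0 \<le> gB a c y" unfolding gB_def by (simp add: sum_nonneg)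
lemma gA_nn: "0 \<le> gA a c y" unfolding gA_def by simp

lemma gB_le: "gB a c y \<le> Phi y"
proof -
  have "gB a c y \<le> (\<Sum>c\<in>UNIV. gB a c y)" by (rule le_sum_nonneg[OF gB_nn])
  also have "\<dots> \<le> (\<Sum>a\<in>UNIV. \<Sum>c\<in>UNIV. gB a c y)" by (rule le_sum_nonneg) (simp add: sum_nonneg gB_nn)
  also have "\<dots> \<le> Phi y" unfolding Phi_def by (simp add: sum_nonneg gA_nn)
  finally show ?thesis .
qed

lemma gA_le: "gA a c y \<le> Phi y"
proof -
  have "gA a c y \<le> (\<Sum>c\<in>UNIV. gA a c y)" by (rule le_sum_nonneg[OF gA_nn])
  also have "\<dots> \<le> (\<Sum>a\<in>UNIV. \<Sum>c\<in>UNIV. gA a c y)" by (rule le_sum_nonneg) (simp add: sum_nonneg gA_nn)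
  also have "\<dots> \<le> Phi y" unfolding Phi_def by (simp add: sum_nonneg gB_nn)
  finally show ?thesis .
qed

lemma bb_le: "\<bar>bb a c y\<bar> \<le> Phi y"
  using gB_le[of a c y] unfolding gB_def by (smt (verit) sum_nonneg abs_ge_zero)

lemma pbb_le: "\<bar>pbb j a c y\<bar> \<le> Phi y"
proof -
  have "\<bar>pbb j a c y\<bar> \<le> (\<Sum>j\<in>UNIV. \<bar>pbb j a c y\<bar>)" by (rule le_sum_nonneg) simp
  then show ?thesis using gB_le[of a c y] unfolding gB_def by (smt (verit) sum_nonneg abs_ge_zero)
qed

lemma ppbb_le: "\<bar>ppbb i j a c y\<bar> \<le> Phi y"
proof -
  have "\<bar>ppbb i j a c y\<bar> \<le> (\<Sum>j\<in>UNIV. \<bar>ppbb i j a c y\<bar>)" by (rule le_sum_nonneg) simp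
  also have "\<dots> \<le> (\<Sum>i\<in>UNIV. \<Sum>j\<in>UNIV. \<bar>ppbb i j a c y\<bar>)" by (rule le_sum_nonneg) (simp add: sum_nonneg)
  finally show ?thesis using gB_le[of a c y] unfolding gB_def by (smt (verit) sum_nonneg abs_ge_zero)
qed

lemma A_le: "\<bar>A y $ i $ k\<bar> \<le> Phi y"
  using gA_le[of i k y] unfolding gA_def by simp

lemma pA_le: "\<bar>pA i k y\<bar> \<le> Phi y"
  using gA_le[of i k y] unfolding gA_def by simp

definition Rt :: "2 \<Rightarrow> 2 \<Rightarrow> 2 \<Rightarrow> 2 \<Rightarrow> (real^2) \<times> (real^2) \<Rightarrow> real" where
  "Rt i j a c p = ppbb i j a c (snd p) * dd c p * dd a p + pbb j a c (snd p) * (axis i 1 $ c) * dd a p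
     + pbb j a c (snd p) * dd c p * (axis i 1 $ a) + pbb i a c (snd p) * (axis j 1 $ c) * dd a p
     + pbb i a c (snd p) * dd c p * (axis j 1 $ a)"

lemma Qf_split: "Qf i j p = (\<Sum>a\<in>UNIV. \<Sum>c\<in>UNIV. Rt i j a c p) + bb i j (snd p) + bb j i (snd p)"
  using exhaust_2[of i] exhaust_2[of j] by (auto simp: Qf_def Rt_def sum_2 axis_def algebra_simps)

lemma Rf_eq: "Rf i j p = (\<Sum>a\<in>UNIV. \<Sum>c\<in>UNIV. Rt i j a c p)"
  by (simp add: Rf_def Qf_split)

lemma dd_le: "\<bar>dd c p\<bar> \<le> norm (snd p - fst p)"
  unfolding dd_def by (rule component_le_norm_cart)

lemma point_bounds:
  assumes q: "q \<in> S0" and B: "Phi (snd q) \<le> B" and r: "r = norm (snd q - fst q)" and Rm: "r \<le> Rm"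
  shows "\<bar>DY k ps q\<bar> \<le> 4 * B * (Rm + 4) * r" "\<bar>Rf i j q\<bar> \<le> 4 * B * (Rm + 4) * r"
    "ps q \<le> 4 * B * r\<^sup>2"
proof -
  have qO: "q \<in> \<Omega> \<times> \<Omega>" using q S0_sub by auto
  have B0: "0 \<le> B" using B bb_le[of 1 1 "snd q"] by linarith
  have r0: "0 \<le> r" using r by simp
  have d: "\<bar>dd c q\<bar> \<le> r" for c using dd_le r by simp
  have bbB: "\<bar>bb a c (snd q)\<bar> \<le> B" for a c using bb_le B by (rule order_trans)
  have pbbB: "\<bar>pbb j a c (snd q)\<bar> \<le> B" for j a c using pbb_le B by (rule order_trans)
  have ppbbB: "\<bar>ppbb i j a c (snd q)\<bar> \<le> B" for i j a c using ppbb_le B by (rule order_trans)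
  have Brr: "B * r * r \<le> B * Rm * r" using B0 r0 Rm by (simp add: mult_left_mono mult_right_mono)
  have X1: "\<bar>g * u * v\<bar> \<le> B * r * r" if "\<bar>g\<bar> \<le> B" "\<bar>u\<bar> \<le> r" "\<bar>v\<bar> \<le> r" for g u v
    by (rule abs_mult3_le[OF that])
  have X2: "\<bar>g * u * v\<bar> \<le> B * 1 * r" if "\<bar>g\<bar> \<le> B" "\<bar>u\<bar> \<le> 1" "\<bar>v\<bar> \<le> r" for g u v
    by (rule abs_mult3_le[OF that])
  have X3: "\<bar>g * u * v\<bar> \<le> B * r * 1" if "\<bar>g\<bar> \<le> B" "\<bar>u\<bar> \<le> r" "\<bar>v\<bar> \<le> 1" for g u v
    by (rule abs_mult3_le[OF that])
  have "\<bar>Pf k q\<bar> \<le> 4 * (B * (Rm + 4) * r)"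
    unfolding Pf_def
  proof (rule sum4_bound)
    fix a c
    have "\<bar>pbb k a c (snd q) * dd c q * dd a q\<bar> \<le> B * r * r" by (rule X1[OF pbbB d d])
    moreover have "\<bar>bb a c (snd q) * (axis k 1 $ c) * dd a q\<bar> \<le> B * 1 * r" by (rule X2[OF bbB delta_le d])
    moreover have "\<bar>bb a c (snd q) * dd c q * (axis k 1 $ a)\<bar> \<le> B * r * 1" by (rule X3[OF bbB d delta_le])
    ultimately show "\<bar>pbb k a c (snd q) * dd c q * dd a q + bb a c (snd q) * (axis k 1 $ c) * dd a q + bb a c (snd q) * dd c q * (axis k 1 $ a)\<bar> \<le> B * (Rm + 4) * r"
      using Brr B0 r0 by (simp add: algebra_simps)
  qed
  then show "\<bar>DY k ps q\<bar> \<le> 4 * B * (Rm + 4) * r" using DY_ps[OF qO] by simp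
  have "\<bar>Rf i j q\<bar> \<le> 4 * (B * (Rm + 4) * r)"
    unfolding Rf_eq
  proof (rule sum4_bound)
    fix a c
    have "\<bar>ppbb i j a c (snd q) * dd c q * dd a q\<bar> \<le> B * r * r" by (rule X1[OF ppbbB d d])
    moreover have "\<bar>pbb j a c (snd q) * (axis i 1 $ c) * dd a q\<bar> \<le> B * 1 * r" by (rule X2[OF pbbB delta_le d])
    moreover have "\<bar>pbb j a c (snd q) * dd c q * (axis i 1 $ a)\<bar> \<le> B * r * 1" by (rule X3[OF pbbB d delta_le])
    moreover have "\<bar>pbb i a c (snd q) * (axis j 1 $ c) * dd a q\<bar> \<le> B * 1 * r" by (rule X2[OF pbbB delta_le d])
    moreover have "\<bar>pbb i a c (snd q) * dd c q * (axis j 1 $ a)\<bar> \<le> B * r * 1" by (rule X3[OF pbbB d delta_le])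
    ultimately show "\<bar>Rt i j a c q\<bar> \<le> B * (Rm + 4) * r"
      unfolding Rt_def using Brr B0 r0 by (simp add: algebra_simps)
  qed
  then show "\<bar>Rf i j q\<bar> \<le> 4 * B * (Rm + 4) * r" by simp
  have "\<bar>ps q\<bar> \<le> 4 * (B * r * r)"
    unfolding ps_def by (rule sum4_bound) (rule X1[OF bbB d d])
  then show "ps q \<le> 4 * B * r\<^sup>2" by (simp add: power2_eq_square algebra_simps)
qed

lemma ps_lower:
  assumes q: "q \<in> S0" and B: "Phi (snd q) \<le> B" and r: "r = norm (snd q - fst q)"
  shows "lam / (16 * B\<^sup>2) * r\<^sup>2 \<le> ps q"
proof -
  obtain x y where qq: "q = (x, y)" by (cases q)
  have y: "y \<in> \<Omega>" and xy: "x \<noteq> y" using q qq S0_def by auto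
  let ?\<xi> = "inv2 (A y) *v (y - x)"
  have AB: "\<bar>A y $ i $ k\<bar> \<le> B" for i k using A_le B qq by (metis order_trans snd_conv)
  have Bpos: "B > 0"
  proof -
    have "A y *v ?\<xi> = y - x" by (rule psi_lower(2)[OF y])
    then have "A y \<noteq> 0" using xy by auto
    then obtain i k where "A y $ i $ k \<noteq> 0" by (auto simp: vec_eq_iff)
    then show ?thesis using AB[of i k] by linarith
  qed
  have "r = norm (A y *v ?\<xi>)" using psi_lower(2)[OF y] r qq by simp
  also have "\<dots> \<le> (\<Sum>i\<in>UNIV. \<bar>(A y *v ?\<xi>) $ i\<bar>)" by (rule norm_le_l1_cart)
  also have "\<dots> \<le> (\<Sum>i\<in>(UNIV::2 set). \<Sum>k\<in>(UNIV::2 set). B * norm ?\<xi>)"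
  proof -
    have bnd: "\<bar>(A y *v ?\<xi>) $ i\<bar> \<le> (\<Sum>k\<in>(UNIV::2 set). B * norm ?\<xi>)" for i
    proof -
      have "\<bar>(A y *v ?\<xi>) $ i\<bar> = \<bar>\<Sum>k\<in>UNIV. A y $ i $ k * ?\<xi> $ k\<bar>" by (simp add: matrix_vector_mult_def)
      also have "\<dots> \<le> (\<Sum>k\<in>UNIV. \<bar>A y $ i $ k * ?\<xi> $ k\<bar>)" by (rule sum_abs)
      also have "\<dots> \<le> (\<Sum>k\<in>(UNIV::2 set). B * norm ?\<xi>)"
        by (rule sum_mono) (rule abs_mult_le[OF AB component_le_norm_cart])
      finally show ?thesis .
    qed
    then show ?thesis by (intro sum_mono) blast
  qed
  also have "\<dots> = 4 * B * norm ?\<xi>" by (simp add: sum_2)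
  finally have rn: "r \<le> 4 * B * norm ?\<xi>" .
  then have "r\<^sup>2 \<le> (4 * B * norm ?\<xi>)\<^sup>2" using r by (simp add: power_mono)
  then have "lam / (16 * B\<^sup>2) * r\<^sup>2 \<le> lam / (16 * B\<^sup>2) * (4 * B * norm ?\<xi>)\<^sup>2"
    using lam Bpos by (intro mult_left_mono) auto
  also have "\<dots> = lam * (norm ?\<xi>)\<^sup>2" using Bpos by (simp add: power2_eq_square field_simps)
  also have "\<dots> \<le> psi A x y" by (rule psi_lower(1)[OF y])
  also have "\<dots> = ps q" using psi_ps[OF y] qq by simp
  finally show ?thesis .
qed

end

lemma norm_mat_le: "norm (M :: real^2^2) \<le> (\<Sum>i\<in>UNIV. \<Sum>j\<in>UNIV. \<bar>M $ i $ j\<bar>)"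
proof -
  have "norm M \<le> (\<Sum>i\<in>UNIV. norm (M $ i))"
    unfolding norm_vec_def by (rule L2_set_le_sum) auto
  also have "\<dots> \<le> (\<Sum>i\<in>UNIV. \<Sum>j\<in>UNIV. \<bar>M $ i $ j\<bar>)"
    by (rule sum_mono) (rule norm_le_l1_cart)
  finally show ?thesis .
qed

context L
begin

definition N :: "(real^2) \<times> (real^2) \<Rightarrow> real^2^2" where
  "N q = (if q \<in> S0 then E2 q else 0)"

lemma loc_bound:
  assumes p0: "p0 \<in> \<Omega> \<times> \<Omega>"
  shows "\<exists>\<rho>>0. bounded (N ` (ball p0 \<rho> \<inter> \<Omega> \<times> \<Omega>))"
proof -
  obtain x0 y0 where pp: "p0 = (x0, y0)" by (cases p0)
  have y0: "y0 \<in> \<Omega>" using p0 pp by auto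
  obtain \<rho> where \<rho>: "\<rho> > 0" "cball y0 \<rho> \<subseteq> \<Omega>" using opn y0 open_contains_cball by blast
  have "continuous_on (cball y0 \<rho>) Phi" using cont_Phi \<rho>(2) continuous_on_subset by blast
  then have "compact (Phi ` cball y0 \<rho>)" by (rule compact_continuous_image) simp
  then obtain B0 where B0: "\<And>z. z \<in> Phi ` cball y0 \<rho> \<Longrightarrow> norm z \<le> B0"
    using compact_imp_bounded bounded_iff by metis
  define B where "B = \<bar>B0\<bar> + 1"
  have Bpos: "B > 0" unfolding B_def by simp
  have PhiB: "Phi y \<le> B" if "y \<in> cball y0 \<rho>" for y
    using B0[of "Phi y"] that unfolding B_def by auto
  define Rm where "Rm = dist x0 y0 + 2 * \<rho>"
  define c where "c = lam / (16 * B\<^sup>2)"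
  define C where "C = 4 * B * (Rm + 4)"
  define Kc where "Kc = Rm * (\<bar>ln c\<bar> + \<bar>ln (4 * B)\<bar> + 1) + 2 * (1 + Rm\<^sup>2)"
  define Bd where "Bd = C\<^sup>2 / c + C * Kc + 2 * B * (B * (C\<^sup>2 / c) + 2 * (B * (C * Kc)))"
  have cpos: "c > 0" unfolding c_def using lam Bpos by simp
  have Rm0: "Rm \<ge> 0" unfolding Rm_def using \<rho> by simp
  have C0: "C \<ge> 0" unfolding C_def using Bpos Rm0 by simp
  have main: "norm (N q) \<le> 4 * \<bar>4 * Bd\<bar>" if q: "q \<in> ball p0 \<rho> \<inter> \<Omega> \<times> \<Omega>" for q
  proof (cases "q \<in> S0")
    case False then show ?thesis by (simp add: N_def)
  next
    case True
    obtain x y where qq: "q = (x, y)" by (cases q)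
    have dq: "dist p0 q < \<rho>" using q by auto
    have dy: "dist y0 y < \<rho>" using dist_snd_le[of p0 q] dq pp qq by simp
    have dx: "dist x0 x < \<rho>" using dist_fst_le[of p0 q] dq pp qq by simp
    have yc: "snd q \<in> cball y0 \<rho>" using dy qq by simp
    have PB: "Phi (snd q) \<le> B" by (rule PhiB[OF yc])
    define r where "r = norm (snd q - fst q)"
    have xy: "x \<noteq> y" using True qq S0_def by auto
    have rpos: "r > 0" unfolding r_def using xy qq by simp
    have rRm: "r \<le> Rm"
    proof -
      have "r = dist y x" unfolding r_def qq by (simp add: dist_norm)
      also have "\<dots> \<le> dist y y0 + dist y0 x0 + dist x0 x" by (metis dist_triangle order_trans add_right_mono)
      finally show ?thesis unfolding Rm_def using dx dy by (simp add: dist_commute)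
    qed
    have P: "\<bar>DY k ps q\<bar> \<le> C * r" for k using point_bounds(1)[OF True PB r_def rRm] unfolding C_def .
    have R: "\<bar>Rf i j q\<bar> \<le> C * r" for i j using point_bounds(2)[OF True PB r_def rRm] unfolding C_def .
    have su: "ps q \<le> (4 * B) * r\<^sup>2" using point_bounds(3)[OF True PB r_def rRm] by simp
    have sl: "c * r\<^sup>2 \<le> ps q" unfolding c_def by (rule ps_lower[OF True PB r_def])
    have L: "r * \<bar>ln (ps q) + 1\<bar> \<le> Kc" unfolding Kc_def
      by (rule rL_bound[OF cpos _ rpos sl su rRm]) (use Bpos in simp)
    have ent: "\<bar>E2 q $ i $ j\<bar> \<le> Bd" for i j
      unfolding E2_expr[OF True] Bd_def
      by (rule E_bound[where Am="\<lambda>i k. A (snd q) $ i $ k" and pA="\<lambda>i k. pA i k (snd q)" and b="\<lambda>i j. bb i j (snd q)"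
            and P="\<lambda>k. DY k ps q" and R="\<lambda>i j. Rf i j q"])
         (use P R sl cpos rpos L Bpos C0 in \<open>auto intro: order_trans[OF A_le PB] order_trans[OF pA_le PB] order_trans[OF bb_le PB]\<close>)
    have "norm (E2 q) \<le> (\<Sum>i\<in>UNIV. \<Sum>j\<in>UNIV. \<bar>E2 q $ i $ j\<bar>)" by (rule norm_mat_le)
    also have "\<dots> \<le> 4 * Bd" using ent[of 1 1] ent[of 1 2] ent[of 2 1] ent[of 2 2] by (simp add: sum_2)
    finally show ?thesis using True by (simp add: N_def)
  qed
  have "bounded (N ` (ball p0 \<rho> \<inter> \<Omega> \<times> \<Omega>))"
    unfolding bounded_iff by (rule exI[of _ "4 * \<bar>4 * Bd\<bar>"]) (use main in blast)
  then show ?thesis using \<rho>(1) by blast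
qed

lemma N_meas: "N \<in> borel_measurable (restrict_space borel (\<Omega> \<times> \<Omega>))"
proof -
  have "(\<lambda>q. if q \<in> S0 then E2 q else 0) \<in> borel_measurable borel"
    by (rule borel_measurable_continuous_on_if) (use opnS0 Ck_E2[of 0] in auto)
  then show ?thesis unfolding N_def by (rule measurable_restrict_space1)
qed

lemma N_smooth: "smooth_on (\<Omega> \<times> \<Omega> - {(x, x) | x. x \<in> \<Omega>}) N"
  unfolding smooth_on_def S0_eq[symmetric]
  by (intro allI Ck_cong[OF opnS0 _ Ck_E2]) (simp add: N_def)

end

lemma d2_ell:
  assumes "lam > 0" "\<And>\<xi>. lam * (norm \<xi>)\<^sup>2 \<le> (M *v \<xi>) \<bullet> \<xi>"
  shows "d2 M \<noteq> 0"
proof -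
  have "\<forall>\<xi>. M *v \<xi> = 0 \<longrightarrow> \<xi> = 0"
  proof (intro allI impI)
    fix \<xi> assume "M *v \<xi> = 0"
    then have "lam * (norm \<xi>)\<^sup>2 \<le> 0" using assms(2)[of \<xi>] by simp
    then show "\<xi> = 0" using assms(1) by (simp add: mult_le_0_iff)
  qed
  then have "invertible M" using matrix_left_invertible_ker invertible_left_inverse by blast
  then show ?thesis using invertible_det_nz d2_det by metis
qed

theorem lemma3p5:
  fixes \<Omega> :: "(real^2) set" and A :: "real^2 \<Rightarrow> real^2^2"
  assumes "smooth_bounded_domain \<Omega>"
    and "smooth_on_closure \<Omega> A"
    and "\<forall>y\<in>closure \<Omega>. transpose (A y) = A y"
    and "uniformly_elliptic (closure \<Omega>) A"
  shows "\<exists>M0 :: real^2 \<Rightarrow> real^2^2. \<exists>N0 :: (real^2) \<times> (real^2) \<Rightarrow> real^2^2.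
     smooth_on_closure \<Omega> M0 \<and>
     N0 \<in> borel_measurable (restrict_space borel (\<Omega> \<times> \<Omega>)) \<and>
     locally_bounded_on (\<Omega> \<times> \<Omega>) N0 \<and>
     smooth_on (\<Omega> \<times> \<Omega> - {(x, x) | x. x \<in> \<Omega>}) N0 \<and>
     (\<forall>x\<in>\<Omega>. \<forall>y\<in>\<Omega>. x \<noteq> y \<longrightarrow>
        hessian (\<lambda>z. psi A x z * ln (psi A x z)) y =
          ((1 / sqrt 2) * divergence (\<lambda>z. A z *v gradient (\<lambda>w. psi A x w * ln (psi A x w)) z) y)
            *\<^sub>R M0 y + N0 (x, y)) \<and>
     (\<forall>x\<in>\<Omega>. M0 x = (1 / sqrt 2) *\<^sub>R matrix_inv (A x))"
proof -
  have opn: "open \<Omega>" using assms(1) unfolding smooth_bounded_domain_def by blast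
  obtain U g where U: "open U" "closure \<Omega> \<subseteq> U" "smooth_on U g" "\<And>x. x \<in> closure \<Omega> \<Longrightarrow> g x = A x"
    using assms(2) unfolding smooth_on_closure_def by blast
  obtain lam where lm: "lam > 0" "\<And>y \<xi>. y \<in> closure \<Omega> \<Longrightarrow> lam * (norm \<xi>)\<^sup>2 \<le> (A y *v \<xi>) \<bullet> \<xi>"
    using assms(4) unfolding uniformly_elliptic_def by blast
  have OU: "\<Omega> \<subseteq> U" using U(2) closure_subset by blast
  have smA: "Ck_on k \<Omega> A" for k
  proof -
    have "Ck_on k \<Omega> g" by (rule Ck_subset[OF smooth_Ck[OF U(3)] opn OU U(1)])
    then show ?thesis by (rule Ck_cong[OF opn, rotated]) (use U(4) closure_subset in blast)
  qed
  have OC: "\<And>y. y \<in> \<Omega> \<Longrightarrow> y \<in> closure \<Omega>" using closure_subset by blast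
  interpret L \<Omega> A lam
    by unfold_locales (use opn smA assms(3) lm OC in auto)
  define U' where "U' = U \<inter> (\<lambda>y. d2 (g y)) -` (- {0})"
  have contd: "continuous_on U (\<lambda>y. d2 (g y))"
  proof -
    have "Ck_on 0 U g" by (rule smooth_Ck[OF U(3)])
    then have "continuous_on U g" by simp
    then show ?thesis unfolding d2_def by (intro continuous_intros)
  qed
  have U'o: "open U'" unfolding U'_def by (rule continuous_open_preimage[OF contd U(1)]) auto
  have detg: "d2 (g y) \<noteq> 0" if "y \<in> closure \<Omega>" for y
    using d2_ell[OF lm(1) lm(2)[OF that]] U(4)[OF that] by simp
  have U'c: "closure \<Omega> \<subseteq> U'" unfolding U'_def using U(2) detg by auto
  define M0 where "M0 y = (1 / sqrt 2) *\<^sub>R inv2 (g y)" for y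
  have M0s: "smooth_on U' M0"
    unfolding smooth_on_def M0_def
  proof
    fix k
    have "Ck_on k U' g" by (rule Ck_subset[OF smooth_Ck[OF U(3)] U'o _ U(1)]) (auto simp: U'_def)
    then have "Ck_on k U' (\<lambda>y. inv2 (g y))" by (rule Ck_inv2[OF _ U'o]) (auto simp: U'_def)
    then show "Ck_on k U' (\<lambda>y. (1 / sqrt 2) *\<^sub>R inv2 (g y))"
      by (rule Ck_linear_out[OF bounded_linear_scaleR_right _ U'o])
  qed
  have M0c: "smooth_on_closure \<Omega> M0"
    unfolding smooth_on_closure_def using U'o U'c M0s by blast
  have M0O: "M0 x = (1 / sqrt 2) *\<^sub>R inv2 (A x)" if "x \<in> \<Omega>" for x
    unfolding M0_def using U(4)[OF OC[OF that]] by simp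
  have M0eq: "\<forall>x\<in>\<Omega>. M0 x = (1 / sqrt 2) *\<^sub>R matrix_inv (A x)"
    using M0O minv by simp
  have lb: "locally_bounded_on (\<Omega> \<times> \<Omega>) N"
    unfolding locally_bounded_on_def using loc_bound by blast
  have eq: "hessian (\<lambda>z. psi A x z * ln (psi A x z)) y =
          ((1 / sqrt 2) * divergence (\<lambda>z. A z *v gradient (\<lambda>w. psi A x w * ln (psi A x w)) z) y)
            *\<^sub>R M0 y + N (x, y)" if "x \<in> \<Omega>" "y \<in> \<Omega>" "x \<noteq> y" for x y
  proof -
    have xy: "(x, y) \<in> S0" using that S0_def by auto
    show ?thesis
      unfolding hessian_eq[OF that] div_eq[OF that] M0O[OF that(2)] N_def
      using xy by (simp add: vec_eq_iff E2_def bb_def)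
  qed
  show ?thesis
    using M0c N_meas lb N_smooth eq M0eq by blast
qed

end
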